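(* Let $D$ be a delta-matroid on $[n,\overline{n}]$. The collection of independent sets $I$ of $D$ with $a(I)=0$ is a simplicial complex on $[n,\overline{n}]$, i.e., it is closed under taking subsets.
   Context: For a finite $E\subseteq\{1,2,\dots\}$ let $E\cup\overline{E}$ consist of $E$ and formal copies $\overline{i}$ ($i\in E$), with involution $a\mapsto\overline{a}$; $\overline{S}=\{\overline{a}:a\in S\}$; $[n,\overline{n}]$ is the case $E=[n]$. A subset is admissible if it contains at most one of $i,\overline{i}$ for each $i$. In $\mathbb{R}^E$ set $e_{\overline{i}}=-e_i$, $e_S=\sum_{a\in S}e_a$. A delta-matroid on $E\cup\overline{E}$ is a nonempty collection $\mathcal{F}$ of admissible sets of size $|E|$ (feasible sets) such that $\operatorname{Conv}\{e_B:B\in\mathcal{F}\}$ has all edges parallel to some $e_i$ or $e_i\pm e_j$. An admissible $S$ is independent in $D$ if it is contained in a feasible set. For $A\subseteq[n]$, the projection $D(A)$ is the delta-matroid on $([n]\setminus A)\cup\overline{([n]\setminus A)}$ with feasible sets $B\setminus(A\cup\overline{A})$, $B\in\mathcal{F}$. For admissible $S$, $\underline{S}\subseteq[n]$ is its unsigned version (image under identifying $i$ with $\overline{i}$). Order $[n]$ by $1<2<\dots<n$. For a delta-matroid $D'$ on $E\cup\overline{E}$ and a feasible set $B$ of $D'$: $i\in E$ is $B$-orientable if $B\,\Delta\,\{i,\overline{i}\}$ is not feasible in $D'$; $i$ is $B$-active if it is $B$-orientable and there is no $j\in E$ with $j<i$ such that $B\,\Delta\,\{i,j,\overline{i},\overline{j}\}$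 is feasible in $D'$. For $I$ independent in $D$, $I$ is a feasible set of $D([n]\setminus\underline{I})$, and $i\in\underline{I}$ is $I$-active if it is $I$-active in $D([n]\setminus\underline{I})$; $a(I)$ is the number of $I$-active elements of $\underline{I}$. *)

theory Defs
  imports "HOL-Analysis.Analysis" "HOL-Library.Function_Algebras"
begin

text \<open>We model R^E (E a finite set of positive integers) inside the real vector
space of all functions int => real, with pointwise operations.\<close>

instantiation "fun" :: (type, real_vector) real_vector
begin
definition scaleR_fun :: "real \<Rightarrow> ('a \<Rightarrow> 'b) \<Rightarrow> 'a \<Rightarrow> 'b"
  where "scaleR_fun c f = (\<lambda>x. c *\<^sub>R f x)"
instance
  by standard (auto simp: scaleR_fun_def fun_eq_iff scaleR_add_right scaleR_add_left)
end

text \<open>An element i of [n] is the integer i>0, its formal copy (bar i) is the integer -i.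
The involution a |-> bar a is negation.\<close>

definition signed_ground :: "nat \<Rightarrow> int set" where
  "signed_ground n = {i. 1 \<le> i \<and> i \<le> int n} \<union> {i. - int n \<le> i \<and> i \<le> -1}"

definition admissible :: "int set \<Rightarrow> bool" where
  "admissible S \<longleftrightarrow> (\<forall>a. \<not> (a \<in> S \<and> - a \<in> S))"

definition unsigned :: "int set \<Rightarrow> int set" where
  "unsigned S = abs ` S"

definition unitv :: "int \<Rightarrow> (int \<Rightarrow> real)" where
  "unitv i = (\<lambda>k. if k = i then 1 else 0)"

definition esigned :: "int \<Rightarrow> (int \<Rightarrow> real)" where
  "esigned a = (if a > 0 then unitv a else - unitv (- a))"

definition evec :: "int set \<Rightarrow> (int \<Rightarrow> real)" where
  "evec S = (\<Sum>a\<in>S. esigned a)"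

definition is_edge :: "(int \<Rightarrow> real) set \<Rightarrow> (int \<Rightarrow> real) \<Rightarrow> (int \<Rightarrow> real) \<Rightarrow> bool" where
  "is_edge P x y \<longleftrightarrow> x \<noteq> y \<and> closed_segment x y face_of P"

definition parallel :: "(int \<Rightarrow> real) \<Rightarrow> (int \<Rightarrow> real) \<Rightarrow> bool" where
  "parallel v w \<longleftrightarrow> (\<exists>c. c \<noteq> 0 \<and> v = c *\<^sub>R w)"

definition delta_matroid :: "nat \<Rightarrow> int set set \<Rightarrow> bool" where
  "delta_matroid n F \<longleftrightarrow>
     F \<noteq> {} \<and>
     (\<forall>B\<in>F. B \<subseteq> signed_ground n \<and> admissible B \<and> card B = n) \<and>
     (\<forall>x y. is_edge (convex hull (evec ` F)) x y \<longrightarrow>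
        (\<exists>i\<in>{1..int n}. parallel (x - y) (unitv i)) \<or>
        (\<exists>i\<in>{1..int n}. \<exists>j\<in>{1..int n}. i \<noteq> j \<and>
            (parallel (x - y) (unitv i + unitv j) \<or> parallel (x - y) (unitv i - unitv j))))"

definition independent :: "nat \<Rightarrow> int set set \<Rightarrow> int set \<Rightarrow> bool" where
  "independent n F S \<longleftrightarrow> S \<subseteq> signed_ground n \<and> admissible S \<and> (\<exists>B\<in>F. S \<subseteq> B)"

text \<open>Feasible sets of the projection D(A) where A = [n] - E', i.e. the delta-matroid
on E' \<union> bar E' with feasible sets B \<inter> (E' \<union> bar E').\<close>
definition restrict_feasible :: "int set set \<Rightarrow> int set \<Rightarrow> int set set" where
  "restrict_feasible F E' = (\<lambda>B. B \<inter> (E' \<union> uminus ` E')) ` F"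

definition symdiff :: "int set \<Rightarrow> int set \<Rightarrow> int set" where
  "symdiff A B = (A - B) \<union> (B - A)"

definition orientable :: "int set set \<Rightarrow> int set \<Rightarrow> int \<Rightarrow> bool" where
  "orientable F' B i \<longleftrightarrow> symdiff B {i, - i} \<notin> F'"

definition active :: "int set \<Rightarrow> int set set \<Rightarrow> int set \<Rightarrow> int \<Rightarrow> bool" where
  "active E F' B i \<longleftrightarrow> orientable F' B i \<and>
     \<not> (\<exists>j\<in>E. j < i \<and> symdiff B {i, j, - i, - j} \<in> F')"

definition I_active :: "int set set \<Rightarrow> int set \<Rightarrow> int \<Rightarrow> bool" where
  "I_active F I i \<longleftrightarrow> i \<in> unsigned I \<and>
     active (unsigned I) (restrict_feasible F (unsigned I)) I i"

definition activity :: "int set set \<Rightarrow> int set \<Rightarrow> nat" where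
  "activity F I = card {i \<in> unsigned I. I_active F I i}"

end

theory Submission
  imports Defs
begin

lemma restr_eq:
  assumes "admissible I" "J \<subseteq> I"
  shows "I \<inter> (unsigned J \<union> uminus ` unsigned J) = J"
proof
  show "J \<subseteq> I \<inter> (unsigned J \<union> uminus ` unsigned J)"
  proof
    fix b assume b: "b \<in> J"
    have "b = \<bar>b\<bar> \<or> b = - \<bar>b\<bar>" by (simp add: abs_if)
    then show "b \<in> I \<inter> (unsigned J \<union> uminus ` unsigned J)"
      using b assms(2) unfolding unsigned_def by (metis IntI UnI1 UnI2 image_eqI subsetD)
  qed
next
  show "I \<inter> (unsigned J \<union> uminus ` unsigned J) \<subseteq> J"
  proof
    fix x assume x: "x \<in> I \<inter> (unsigned J \<union> uminus ` unsigned J)"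
    then obtain b where b: "b \<in> J" "x = \<bar>b\<bar> \<or> x = - \<bar>b\<bar>" unfolding unsigned_def by auto
    have bI: "b \<in> I" using b assms(2) by auto
    have "x = b \<or> x = - b" using b(2) by (auto simp: abs_if)
    then show "x \<in> J" using x bI b(1) assms(1) unfolding admissible_def by auto
  qed
qed

lemma symdiff_int: "symdiff A Y \<inter> W = symdiff (A \<inter> W) (Y \<inter> W)"
  unfolding symdiff_def by auto

lemma restr_mono:
  assumes "X \<in> restrict_feasible F U" "V \<subseteq> U"
  shows "X \<inter> (V \<union> uminus ` V) \<in> restrict_feasible F V"
proof -
  obtain B where B: "B \<in> F" "X = B \<inter> (U \<union> uminus ` U)"
    using assms(1) unfolding restrict_feasible_def by auto
  have "X \<inter> (V \<union> uminus ` V) = B \<inter> (V \<union> uminus ` V)" using B(2) assms(2) by auto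
  then show ?thesis using B(1) unfolding restrict_feasible_def by auto
qed

theorem proposition3p9:
  fixes n :: nat and F :: "int set set"
  assumes "delta_matroid n F"
  shows "\<forall>I J. independent n F I \<and> activity F I = 0 \<and> J \<subseteq> I
           \<longrightarrow> independent n F J \<and> activity F J = 0"
proof (intro allI impI)
  fix I J
  assume h: "independent n F I \<and> activity F I = 0 \<and> J \<subseteq> I"
  have indI: "independent n F I" and act: "activity F I = 0" and JI: "J \<subseteq> I" using h by auto
  have admI: "admissible I" and IS: "I \<subseteq> signed_ground n" using indI unfolding independent_def by auto
  have admJ: "admissible J" using admI JI unfolding admissible_def by blast
  show "independent n F J \<and> activity F J = 0"
  proof
    show "independent n F J" using indI JI admJ unfolding independent_def by blast
  next
    have finS: "finite (signed_ground n)" unfolding signed_ground_def by auto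
    have finI: "finite (unsigned I)" using finite_subset[OF IS finS] unfolding unsigned_def by auto
    have emptyI: "{i \<in> unsigned I. I_active F I i} = {}"
      using act finI unfolding activity_def by simp
    define W where "W = unsigned J \<union> uminus ` unsigned J"
    have IW: "I \<inter> W = J" unfolding W_def using restr_eq[OF admI JI] .
    have UJI: "unsigned J \<subseteq> unsigned I" using JI unfolding unsigned_def by auto
    have "{i \<in> unsigned J. I_active F J i} = {}"
    proof (rule ccontr)
      assume "{i \<in> unsigned J. I_active F J i} \<noteq> {}"
      then obtain i where iJ: "i \<in> unsigned J" and aJ: "I_active F J i" by auto
      have iI: "i \<in> unsigned I" using iJ UJI by auto
      then have "\<not> I_active F I i" using emptyI by auto
      then have "symdiff I {i, - i} \<in> restrict_feasible F (unsigned I) \<or>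
        (\<exists>j\<in>unsigned I. j < i \<and> symdiff I {i, j, - i, - j} \<in> restrict_feasible F (unsigned I))"
        using iI unfolding I_active_def active_def orientable_def by auto
      then show False
      proof
        assume a: "symdiff I {i, - i} \<in> restrict_feasible F (unsigned I)"
        have "symdiff I {i, - i} \<inter> W \<in> restrict_feasible F (unsigned J)"
          using restr_mono[OF a UJI] unfolding W_def .
        moreover have "symdiff I {i, - i} \<inter> W = symdiff J {i, - i}"
          unfolding symdiff_int IW using iJ unfolding W_def by auto
        ultimately show False using aJ unfolding I_active_def active_def orientable_def by auto
      next
        assume "\<exists>j\<in>unsigned I. j < i \<and> symdiff I {i, j, - i, - j} \<in> restrict_feasible F (unsigned I)"
        then obtain j where j: "j \<in> unsigned I" "j < i"
          and a: "symdiff I {i, j, - i, - j} \<in> restrict_feasible F (unsigned I)" by auto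
        have m: "symdiff I {i, j, - i, - j} \<inter> W \<in> restrict_feasible F (unsigned J)"
          using restr_mono[OF a UJI] unfolding W_def .
        have e: "symdiff I {i, j, - i, - j} \<inter> W = symdiff J ({i, j, - i, - j} \<inter> W)"
          unfolding symdiff_int IW ..
        show False
        proof (cases "j \<in> unsigned J")
          case True
          have "{i, j, - i, - j} \<inter> W = {i, j, - i, - j}" using True iJ unfolding W_def by auto
          then show False using m e aJ True j(2) unfolding I_active_def active_def by auto
        next
          case False
          have jpos: "j \<ge> 0" using j(1) unfolding unsigned_def by auto
          have "- j \<notin> W"
          proof
            assume "- j \<in> W"
            then show False using False jpos unfolding W_def unsigned_def by force
          qed
          then have "{i, j, - i, - j} \<inter> W = {i, - i}" using False iJ unfolding W_def by auto
          then show False using m e aJ unfolding I_active_def active_def orientable_def by auto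
        qed
      qed
    qed
    then show "activity F J = 0" unfolding activity_def by (metis card.empty)
  qed
qed

end
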